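(* Let $A$ be a finite abelian group of odd order and $K=A\times\hat{A}$. Then the orbits of $\mathrm{Sp}(K)$ on $K$ coincide with the orbits of $\mathrm{Aut}(K)$ on $K$.
   Context: $\hat A$ is the Pontryagin dual of $A$ (homomorphisms $A\to\mathbb{T}$), written additively, with $\langle a,\alpha\rangle$ the value of $\alpha\in\hat A$ at $a\in A$. The symplectic form on $K$ is $[(a_1,\alpha_1),(a_2,\alpha_2)]=\langle a_2,\alpha_1\rangle\langle a_1,\alpha_2\rangle^{-1}$, and $\mathrm{Sp}(K)=\{\sigma\in\mathrm{Aut}(K):[\sigma(u_1),\sigma(u_2)]=[u_1,u_2]\ \forall u_1,u_2\in K\}$. *)

theory Defs
  imports Complex_Main "HOL-Algebra.Group"
begin

text \<open>Pontryagin dual of a finite abelian group G: homomorphisms from G into the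
  circle group T = {z. |z| = 1} (a multiplicative subgroup of the complex numbers),
  represented as extensional functions on the carrier of G.\<close>
definition dual :: "('a, 'b) monoid_scheme \<Rightarrow> ('a \<Rightarrow> complex) set" where
  "dual G = {\<chi>. \<chi> \<in> carrier G \<rightarrow>\<^sub>E {z::complex. cmod z = 1} \<and>
      (\<forall>x\<in>carrier G. \<forall>y\<in>carrier G. \<chi> (x \<otimes>\<^bsub>G\<^esub> y) = \<chi> x * \<chi> y)}"

definition KK :: "('a, 'b) monoid_scheme \<Rightarrow> ('a \<times> ('a \<Rightarrow> complex)) monoid" where
  "KK G = \<lparr>carrier = carrier G \<times> dual G,
           mult = (\<lambda>(a, \<chi>) (b, \<psi>). (a \<otimes>\<^bsub>G\<^esub> b, \<lambda>x\<in>carrier G. \<chi> x * \<psi> x)),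
           one = (\<one>\<^bsub>G\<^esub>, \<lambda>x\<in>carrier G. 1)\<rparr>"

definition sympl :: "('a \<times> ('a \<Rightarrow> complex)) \<Rightarrow> ('a \<times> ('a \<Rightarrow> complex)) \<Rightarrow> complex" where
  "sympl u1 u2 = snd u1 (fst u2) * inverse (snd u2 (fst u1))"

definition AutK :: "('a, 'b) monoid_scheme \<Rightarrow> (('a \<times> ('a \<Rightarrow> complex)) \<Rightarrow> ('a \<times> ('a \<Rightarrow> complex))) set" where
  "AutK G = iso (KK G) (KK G)"

definition SpK :: "('a, 'b) monoid_scheme \<Rightarrow> (('a \<times> ('a \<Rightarrow> complex)) \<Rightarrow> ('a \<times> ('a \<Rightarrow> complex))) set" where
  "SpK G = {\<sigma> \<in> AutK G. \<forall>u1\<in>carrier (KK G). \<forall>u2\<in>carrier (KK G).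
              sympl (\<sigma> u1) (\<sigma> u2) = sympl u1 u2}"

end

theory Submission
  imports Defs "HOL-Algebra.Multiplicative_Group" "HOL-Computational_Algebra.Primes"
begin

definition rt :: "nat \<Rightarrow> nat \<Rightarrow> complex" where
  "rt N k = cis (2 * pi * real k / real N)"

lemma rt_add: "rt N (a + b) = rt N a * rt N b"
  by (simp add: rt_def cis_mult add_divide_distrib distrib_left)

lemma rt_pow: "rt N k ^ n = rt N (k * n)"
  by (simp add: rt_def DeMoivre mult_ac)

lemma rt_nz: "rt N k \<noteq> 0"
  unfolding rt_def by (metis norm_cis norm_zero zero_neq_one)

lemma rt_0 [simp]: "rt N 0 = 1"
  by (simp add: rt_def)

lemma rt_mod: assumes "N > 0" shows "rt N a = rt N (a mod N)"
proof -
  have "rt N a = rt N (N * (a div N) + a mod N)" by simp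
  also have "\<dots> = rt N (N * (a div N)) * rt N (a mod N)" by (rule rt_add)
  also have "rt N (N * (a div N)) = 1"
  proof -
    have "2 * pi * real (N * (a div N)) / real N = 2 * pi * real (a div N)"
      using assms by simp
    thus ?thesis unfolding rt_def by (simp add: cis_multiple_2pi)
  qed
  finally show ?thesis by simp
qed

lemma rt_eq: assumes "N > 0" "rt N a = rt N b" shows "a mod N = b mod N"
proof -
  have inj: "inj_on (rt N) {..<N}"
    using bij_betw_roots_unity[OF assms(1)] unfolding bij_betw_def rt_def[abs_def] by simp
  have "rt N (a mod N) = rt N (b mod N)" using assms rt_mod by metis
  thus ?thesis using inj assms(1) by (auto simp: inj_on_def)
qed

lemma rt_one_dvd: assumes "N > 0" "rt N a = 1" shows "N dvd a"
  using rt_eq[OF assms(1), of a 0] assms by auto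

definition dlog :: "nat \<Rightarrow> complex \<Rightarrow> nat" where
  "dlog N z = (SOME k. k < N \<and> rt N k = z)"

lemma dlog: assumes "N > 0" "z ^ N = 1" shows "dlog N z < N" "rt N (dlog N z) = z"
proof -
  have "z \<in> (\<lambda>k. cis (2 * pi * real k / real N)) ` {..<N}"
    using bij_betw_roots_unity[OF assms(1)] assms(2) unfolding bij_betw_def by auto
  then obtain k where "k < N" "rt N k = z" by (auto simp: rt_def)
  hence "dlog N z < N \<and> rt N (dlog N z) = z"
    unfolding dlog_def using someI_ex[of "\<lambda>k. k < N \<and> rt N k = z"] by blast
  thus "dlog N z < N" "rt N (dlog N z) = z" by auto
qed

locale symp = comm_group K for K (structure) +
  fixes om :: "'a \<Rightarrow> 'a \<Rightarrow> complex"
  assumes fin: "finite (carrier K)"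
  and om_mult1: "\<lbrakk>x \<in> carrier K; y \<in> carrier K; z \<in> carrier K\<rbrakk> \<Longrightarrow> om (x \<otimes> y) z = om x z * om y z"
  and om_mult2: "\<lbrakk>x \<in> carrier K; y \<in> carrier K; z \<in> carrier K\<rbrakk> \<Longrightarrow> om x (y \<otimes> z) = om x y * om x z"
  and om_alt: "x \<in> carrier K \<Longrightarrow> om x x = 1"
  and om_ax: "\<lbrakk>0 < m; u \<in> carrier K; \<forall>v\<in>carrier K. v [^] (m::nat) = \<one> \<longrightarrow> om u v = 1\<rbrakk>
              \<Longrightarrow> \<exists>x\<in>carrier K. u = x [^] m"
begin

definition Sp where
  "Sp = {\<sigma> \<in> iso K K. \<forall>x\<in>carrier K. \<forall>y\<in>carrier K. om (\<sigma> x) (\<sigma> y) = om x y}"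

definition pw :: "nat \<Rightarrow> 'a set" where
  "pw m = (\<lambda>x. x [^] m) ` carrier K"

lemma om_skew: assumes "x \<in> carrier K" "y \<in> carrier K" shows "om x y * om y x = 1"
proof -
  have "1 = om (x \<otimes> y) (x \<otimes> y)" using assms om_alt by simp
  also have "\<dots> = (om x x * om x y) * (om y x * om y y)"
    using assms by (simp add: om_mult1 om_mult2)
  finally show ?thesis using assms om_alt by simp
qed

lemma om_nz: assumes "x \<in> carrier K" "y \<in> carrier K" shows "om x y \<noteq> 0"
  using om_skew[OF assms] by auto

lemma om_swap: assumes "x \<in> carrier K" "y \<in> carrier K" shows "om y x = inverse (om x y)"
  using om_skew[OF assms] om_nz[OF assms] by (simp add: field_simps)

lemma om_one2 [simp]: assumes "x \<in> carrier K" shows "om x \<one> = 1"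
proof -
  have "om x \<one> = om x \<one> * om x \<one>" using om_mult2[OF assms, of \<one> \<one>] by simp
  thus ?thesis using om_nz[OF assms, of \<one>] by simp
qed

lemma om_one1 [simp]: assumes "x \<in> carrier K" shows "om \<one> x = 1"
proof -
  have "om \<one> x = om \<one> x * om \<one> x" using om_mult1[of \<one> \<one> x] assms by simp
  thus ?thesis using om_nz[OF _ assms, of \<one>] by simp
qed

lemma om_pow1: assumes "x \<in> carrier K" "y \<in> carrier K" shows "om (x [^] (n::nat)) y = om x y ^ n"
  using assms by (induction n) (simp_all add: om_mult1)

lemma om_pow2: assumes "x \<in> carrier K" "y \<in> carrier K" shows "om x (y [^] (n::nat)) = om x y ^ n"
  using assms by (induction n) (simp_all add: om_mult2)

lemma om_inv2: assumes "x \<in> carrier K" "y \<in> carrier K" shows "om x (inv y) = inverse (om x y)"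
proof -
  have "om x (inv y) * om x y = 1" using om_mult2[of x "inv y" y] assms by simp
  thus ?thesis using om_nz[OF assms] by (simp add: field_simps)
qed

lemma om_inv1: assumes "x \<in> carrier K" "y \<in> carrier K" shows "om (inv x) y = inverse (om x y)"
proof -
  have "om (inv x) y * om x y = 1" using om_mult1[of "inv x" x y] assms by simp
  thus ?thesis using om_nz[OF assms] by (simp add: field_simps)
qed

lemma pow_mod_N: assumes "z \<in> carrier K" "z [^] N = \<one>" shows "z [^] (a::nat) = z [^] (a mod N)"
proof -
  have "z [^] a = z [^] (N * (a div N) + a mod N)" by simp
  also have "\<dots> = z [^] (N * (a div N)) \<otimes> z [^] (a mod N)"
    using assms by (simp add: nat_pow_mult)
  also have "z [^] (N * (a div N)) = (z [^] N) [^] (a div N)"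
    by (simp only: nat_pow_pow[OF assms(1)])
  finally show ?thesis using assms by simp
qed

lemma pow_cong_N: assumes "z \<in> carrier K" "z [^] N = \<one>" "a mod N = b mod N"
  shows "z [^] (a::nat) = z [^] b"
  using pow_mod_N[OF assms(1,2)] assms(3) by metis

definition tv :: "nat \<Rightarrow> 'a \<Rightarrow> nat \<Rightarrow> 'a \<Rightarrow> 'a" where
  "tv N z c y = y \<otimes> z [^] (c * dlog N (om y z))"

context
  fixes N :: nat and z
  assumes N: "N > 0" and z: "z \<in> carrier K" and zN: "z [^] N = \<one>"
begin

lemma om_root: assumes "y \<in> carrier K" shows "om y z ^ N = 1"
  using om_pow2[OF assms z, of N] zN assms by simp

lemma tv_carrier: "y \<in> carrier K \<Longrightarrow> tv N z c y \<in> carrier K"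
  using z by (simp add: tv_def)

lemma tv_om: assumes "y \<in> carrier K" shows "om (tv N z c y) z = om y z"
  using assms z by (simp add: tv_def om_mult1 om_pow1 om_alt)

lemma tv_hom: assumes y: "y \<in> carrier K" and y': "y' \<in> carrier K"
  shows "tv N z c (y \<otimes> y') = tv N z c y \<otimes> tv N z c y'"
proof -
  define k1 where "k1 = dlog N (om y z)"
  define k2 where "k2 = dlog N (om y' z)"
  define k where "k = dlog N (om (y \<otimes> y') z)"
  have r1: "rt N k1 = om y z" using dlog[OF N om_root[OF y]] k1_def by simp
  have r2: "rt N k2 = om y' z" using dlog[OF N om_root[OF y']] k2_def by simp
  have r: "rt N k = om y z * om y' z"
    using dlog[OF N om_root, of "y \<otimes> y'"] k_def y y' z by (simp add: om_mult1)
  have "rt N k = rt N (k1 + k2)" using r r1 r2 by (simp add: rt_add)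
  hence "k mod N = (k1 + k2) mod N" using rt_eq N by blast
  hence "(c * k) mod N = (c * k1 + c * k2) mod N"
    by (metis distrib_left mod_mult_right_eq)
  hence "z [^] (c * k) = z [^] (c * k1 + c * k2)" by (rule pow_cong_N[OF z zN])
  also have "\<dots> = z [^] (c * k1) \<otimes> z [^] (c * k2)" using z by (simp add: nat_pow_mult)
  finally have e: "z [^] (c * k) = z [^] (c * k1) \<otimes> z [^] (c * k2)" .
  show ?thesis unfolding tv_def k_def[symmetric] k1_def[symmetric] k2_def[symmetric] e
    using y y' z by (simp add: m_assoc m_lcomm)
qed

lemma tv_tv: assumes y: "y \<in> carrier K" and d: "N dvd c + c'"
  shows "tv N z c' (tv N z c y) = y"
proof -
  define k where "k = dlog N (om y z)"
  have "tv N z c' (tv N z c y) = (y \<otimes> z [^] (c * k)) \<otimes> z [^] (c' * k)"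
    using tv_om[OF y, of c] unfolding tv_def[of N z c' "tv N z c y"] k_def by (simp add: tv_def)
  also have "\<dots> = y \<otimes> z [^] ((c + c') * k)"
    using y z by (simp add: m_assoc nat_pow_mult distrib_right)
  also have "z [^] ((c + c') * k) = z [^] (0::nat)"
    by (rule pow_cong_N[OF z zN]) (use d in auto)
  finally show ?thesis using y by simp
qed

lemma tv_symp: assumes y: "y \<in> carrier K" and y': "y' \<in> carrier K"
  shows "om (tv N z c y) (tv N z c y') = om y y'"
proof -
  define k1 where "k1 = dlog N (om y z)"
  define k2 where "k2 = dlog N (om y' z)"
  have r1: "rt N k1 = om y z" using dlog[OF N om_root[OF y]] k1_def by simp
  have r2: "rt N k2 = om y' z" using dlog[OF N om_root[OF y']] k2_def by simp
  have zy': "om z y' = inverse (rt N k2)" using om_swap[OF y' z] r2 by simp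
  define a where "a = c * k1"
  define b where "b = c * k2"
  have "om (tv N z c y) (tv N z c y') = om (y \<otimes> z [^] a) (y' \<otimes> z [^] b)"
    by (simp add: tv_def k1_def k2_def a_def b_def)
  also have "\<dots> = om y (y' \<otimes> z [^] b) * om (z [^] a) (y' \<otimes> z [^] b)"
    using y y' z by (simp add: om_mult1)
  also have "om y (y' \<otimes> z [^] b) = om y y' * om y z ^ b"
    using y y' z by (simp add: om_mult2 om_pow2)
  also have "om (z [^] a) (y' \<otimes> z [^] b) = om z y' ^ a * om z z ^ (a * b)"
    using y y' z by (simp add: om_mult2 om_pow1 om_pow2 power_mult)
  also have "om z z = 1" using z om_alt by simp
  also have "om y z ^ b = rt N (k1 * b)" unfolding r1[symmetric] by (rule rt_pow)
  also have "om z y' ^ a = inverse (rt N (k2 * a))" unfolding zy' power_inverse rt_pow by (rule refl)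
  also have "k2 * a = k1 * b" by (simp add: a_def b_def)
  also have "rt N (k1 * b) * inverse (rt N (k1 * b)) = 1"
    using rt_nz by simp
  hence "om y y' * rt N (k1 * b) * (inverse (rt N (k1 * b)) * 1 ^ (a * b)) = om y y'"
    by (simp add: field_simps)
  finally show ?thesis by simp
qed

lemma tv_Sp: "tv N z c \<in> Sp"
proof -
  define c' where "c' = c * (N - 1)"
  have "c + c' = c * N" using N unfolding c'_def by (cases N) auto
  hence d1: "N dvd c + c'" by simp
  have d2: "N dvd c' + c" using d1 by (simp add: add.commute)
  have hom: "tv N z c \<in> hom K K" unfolding hom_def using tv_carrier tv_hom by (simp add: Pi_iff)
  have bij: "bij_betw (tv N z c) (carrier K) (carrier K)"
  proof (rule bij_betwI[where g = "tv N z c'"])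
    show "tv N z c \<in> carrier K \<rightarrow> carrier K" using tv_carrier by blast
    show "tv N z c' \<in> carrier K \<rightarrow> carrier K" using tv_carrier by blast
    show "tv N z c' (tv N z c x) = x" if "x \<in> carrier K" for x using tv_tv[OF that d1] .
    show "tv N z c (tv N z c' x) = x" if "x \<in> carrier K" for x using tv_tv[OF that d2] .
  qed
  show ?thesis unfolding Sp_def iso_def using hom bij tv_symp by blast
qed

end

lemma Sp_id: "(\<lambda>x. x) \<in> Sp"
  unfolding Sp_def using iso_set_refl by auto

lemma Sp_comp: assumes "\<sigma> \<in> Sp" "\<tau> \<in> Sp" shows "\<sigma> \<circ> \<tau> \<in> Sp"
proof -
  have "\<sigma> \<circ> \<tau> \<in> iso K K" using assms iso_set_trans unfolding Sp_def by blast
  moreover have "\<tau> x \<in> carrier K" if "x \<in> carrier K" for x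
    using assms(2) that unfolding Sp_def iso_def hom_def by auto
  ultimately show ?thesis using assms unfolding Sp_def by auto
qed

lemma iso_pow: assumes "\<sigma> \<in> iso K K" "x \<in> carrier K" shows "\<sigma> (x [^] (n::nat)) = \<sigma> x [^] n"
  using assms hom_nat_pow[of \<sigma> K K x n] is_group unfolding iso_def by auto

lemma iso_carrier: assumes "\<sigma> \<in> iso K K" "x \<in> carrier K" shows "\<sigma> x \<in> carrier K"
  using assms unfolding iso_def hom_def by auto


lemma pw_sub: "pw m \<subseteq> carrier K"
  unfolding pw_def by auto

lemma pw_one: "\<one> \<in> pw m"
  unfolding pw_def by (rule image_eqI[of _ _ \<one>]) auto

lemma pw_mult: assumes "a \<in> pw m" "b \<in> pw m" shows "a \<otimes> b \<in> pw m"
proof -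
  obtain x y where xy: "x \<in> carrier K" "y \<in> carrier K" "a = x [^] m" "b = y [^] m"
    using assms unfolding pw_def by auto
  have "a \<otimes> b = (x \<otimes> y) [^] m" using xy by (simp add: nat_pow_distrib)
  thus ?thesis using xy unfolding pw_def by auto
qed

lemma pw_inv: assumes "a \<in> pw m" shows "inv a \<in> pw m"
proof -
  obtain x where x: "x \<in> carrier K" "a = x [^] m" using assms unfolding pw_def by auto
  have "inv a = (inv x) [^] m" using x by (simp add: nat_pow_inv)
  thus ?thesis using x unfolding pw_def by auto
qed

lemma pw_pow: assumes "a \<in> pw m" shows "a [^] (k::nat) \<in> pw m"
proof -
  obtain x where x: "x \<in> carrier K" "a = x [^] m" using assms unfolding pw_def by auto
  have "a [^] k = (x [^] k) [^] m" using x by (simp add: nat_pow_pow mult.commute)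
  thus ?thesis using x unfolding pw_def by auto
qed

lemma pw_mono: "pw (p * m) \<subseteq> pw m"
proof
  fix a assume "a \<in> pw (p * m)"
  then obtain x where x: "x \<in> carrier K" "a = x [^] (p * m)" unfolding pw_def by auto
  have "a = (x [^] p) [^] m" using x by (simp add: nat_pow_pow)
  thus "a \<in> pw m" using x unfolding pw_def by auto
qed

lemma pw_powin: assumes "a \<in> pw m" shows "a [^] p \<in> pw (p * m)"
proof -
  obtain x where x: "x \<in> carrier K" "a = x [^] m" using assms unfolding pw_def by auto
  have "a [^] p = x [^] (p * m)" using x by (simp add: nat_pow_pow mult.commute)
  thus ?thesis using x unfolding pw_def by auto
qed

lemma pw_1: "pw 1 = carrier K"
  unfolding pw_def by auto

lemma ax_pw: assumes "0 < m" "u \<in> carrier K" "u \<notin> pw m"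
  shows "\<exists>z\<in>carrier K. z [^] m = \<one> \<and> om u z \<noteq> 1"
  using om_ax[OF assms(1,2)] assms(3) unfolding pw_def by blast

lemma tv_step:
  assumes p: "prime p" and m: "0 < m" and y: "y \<in> pw m" and z: "z \<in> carrier K"
    and zp: "z [^] (p * m) = \<one>" and ne: "om y z \<noteq> 1"
  shows "\<exists>T\<in>Sp. T y = y \<otimes> z [^] m"
proof -
  define N where "N = p * m"
  have p1: "p > 1" using p prime_gt_1_nat by blast
  have N: "N > 0" using p1 m N_def by simp
  obtain x where x: "x \<in> carrier K" "y = x [^] m" using y unfolding pw_def by auto
  have yc: "y \<in> carrier K" using x by simp
  have zN: "z [^] N = \<one>" using zp N_def by simp
  define k where "k = dlog N (om y z)"
  have rN: "om y z ^ N = 1" using om_pow2[OF yc z, of N] zN yc by simp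
  have kN: "k < N" and rk: "rt N k = om y z" using dlog[OF N rN] k_def by auto
  have "om y z ^ p = om x z ^ (m * p)" using x z by (simp add: om_pow1 power_mult)
  also have "\<dots> = om x (z [^] (p * m))" using x z by (simp add: om_pow2 mult.commute)
  also have "\<dots> = 1" using zp x by simp
  finally have "rt N (k * p) = 1" using rk by (simp add: rt_pow[symmetric])
  hence "N dvd k * p" using rt_one_dvd N by blast
  hence "m dvd k" using p1 unfolding N_def by (simp add: mult.commute[of p])
  then obtain j where j: "k = m * j" by blast
  have jp: "j < p" using kN j m unfolding N_def by (simp add: mult.commute[of p])
  have j0: "j \<noteq> 0"
  proof
    assume "j = 0" hence "rt N k = 1" using j by simp
    thus False using ne rk by simp
  qed
  have "coprime j p"
    using p j0 jp by (metis coprime_commute dvd_imp_le neq0_conv not_le prime_imp_coprime_nat)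
  then obtain c t where ct: "j * c = p * t + 1"
    using bezout_nat[of j p] j0 by auto
  have T: "tv N z c \<in> Sp" by (rule tv_Sp[OF N z zN])
  have "tv N z c y = y \<otimes> z [^] (c * k)" unfolding tv_def k_def ..
  also have "c * k = N * t + m" using j ct unfolding N_def
    by (metis add_mult_distrib2 mult.assoc mult.commute mult.left_commute nat_mult_1_right)
  also have "z [^] (N * t + m) = z [^] m"
  proof -
    have "z [^] (N * t + m) = (z [^] N) [^] t \<otimes> z [^] m"
      using z by (simp add: nat_pow_mult[symmetric] nat_pow_pow)
    thus ?thesis using zN z by simp
  qed
  finally show ?thesis using T by blast
qed

lemma final_step:
  assumes p: "prime p" and m: "0 < m" and u: "u \<in> pw m" and v: "v \<in> pw m"
    and nu: "u \<notin> pw (p * m)" and nv: "v \<notin> pw (p * m)" and uv: "u [^] p = v [^] p"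
  shows "\<exists>T\<in>Sp. T u = v"
proof -
  have pm: "0 < p * m" using p m prime_gt_0_nat by simp
  have uc: "u \<in> carrier K" and vc: "v \<in> carrier K" using u v pw_sub by auto
  define d where "d = v \<otimes> inv u"
  have dc: "d \<in> carrier K" using uc vc d_def by simp
  have "d \<in> pw m" unfolding d_def by (rule pw_mult[OF v pw_inv[OF u]])
  then obtain w0 where w0: "w0 \<in> carrier K" "d = w0 [^] m" unfolding pw_def by auto
  have "d [^] p = v [^] p \<otimes> inv (u [^] p)"
    using uc vc by (simp add: d_def nat_pow_distrib nat_pow_inv)
  hence dp: "d [^] p = \<one>" using uv vc by simp
  have w0p: "w0 [^] (p * m) = \<one>"
    using w0 dp by (simp add: nat_pow_pow mult.commute)
  have ud: "u \<otimes> d = v"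
  proof -
    have "u \<otimes> d = v \<otimes> (u \<otimes> inv u)" unfolding d_def using uc vc by (simp add: m_lcomm[of u v])
    thus ?thesis using uc vc by simp
  qed
  show ?thesis
  proof (cases "om u w0 = 1")
    case False
    from tv_step[OF p m u w0(1) w0p False] ud w0 show ?thesis by auto
  next
    case True
    obtain z1 where z1: "z1 \<in> carrier K" "z1 [^] (p * m) = \<one>" "om u z1 \<noteq> 1"
      using ax_pw[OF pm uc nu] by blast
    obtain z2 where z2: "z2 \<in> carrier K" "z2 [^] (p * m) = \<one>" "om v z2 \<noteq> 1"
      using ax_pw[OF pm vc nv] by blast
    obtain w1 where w1: "w1 \<in> carrier K" "w1 [^] (p * m) = \<one>" "om u w1 \<noteq> 1" "om v w1 \<noteq> 1"
    proof (cases "om v z1 = 1")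
      case False thus ?thesis using that z1 by blast
    next
      case vz1: True
      show ?thesis
      proof (cases "om u z2 = 1")
        case False thus ?thesis using that z2 by blast
      next
        case uz2: True
        have "(z1 \<otimes> z2) [^] (p * m) = \<one>" using z1 z2 by (simp add: nat_pow_distrib)
        moreover have "om u (z1 \<otimes> z2) \<noteq> 1" using z1 z2 uc uz2 by (simp add: om_mult2)
        moreover have "om v (z1 \<otimes> z2) \<noteq> 1" using z1 z2 vc vz1 by (simp add: om_mult2)
        ultimately show ?thesis using that z1 z2 by blast
      qed
    qed
    obtain T1 where T1: "T1 \<in> Sp" "T1 u = u \<otimes> w1 [^] m"
      using tv_step[OF p m u w1(1,2,3)] by blast
    define u2 where "u2 = u \<otimes> w1 [^] m"
    have u2: "u2 \<in> pw m" unfolding u2_def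
      by (rule pw_mult[OF u]) (use w1 in \<open>auto simp: pw_def\<close>)
    have u2c: "u2 \<in> carrier K" using u2 pw_sub by auto
    define z where "z = w0 \<otimes> inv w1"
    have zc: "z \<in> carrier K" using w0 w1 z_def by simp
    have zp: "z [^] (p * m) = \<one>" using w0p w1 w0 unfolding z_def
      by (simp add: nat_pow_distrib nat_pow_inv)
    have A: "om u w1 \<noteq> 0" "om v w1 \<noteq> 0" using om_nz uc vc w1 by auto
    have "om u2 z = om u w0 * om u (inv w1) * (om (w1 [^] m) w0 * om (w1 [^] m) (inv w1))"
      unfolding u2_def z_def using uc w0 w1 by (simp add: om_mult1 om_mult2)
    also have "om (w1 [^] m) w0 = om w1 d" using w1 w0 by (simp add: om_pow1 om_pow2)
    also have "om w1 d = om w1 v * inverse (om w1 u)"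
      unfolding d_def using w1 uc vc by (simp add: om_mult2 om_inv2)
    also have "om (w1 [^] m) (inv w1) = 1"
      using w1 by (simp add: om_pow1 om_inv2 om_alt)
    also have "om u (inv w1) = inverse (om u w1)" using uc w1 by (simp add: om_inv2)
    also have "om w1 v = inverse (om v w1)" using om_swap[OF vc w1(1)] .
    also have "om w1 u = inverse (om u w1)" using om_swap[OF uc w1(1)] .
    finally have "om u2 z = inverse (om v w1)" using True A by (simp add: field_simps)
    hence ne: "om u2 z \<noteq> 1" using w1 by simp
    obtain T2 where T2: "T2 \<in> Sp" "T2 u2 = u2 \<otimes> z [^] m"
      using tv_step[OF p m u2 zc zp ne] by blast
    have "u2 \<otimes> z [^] m = u \<otimes> w0 [^] m"
      unfolding u2_def z_def using uc w0 w1
      by (simp add: nat_pow_distrib nat_pow_inv m_assoc m_lcomm m_comm[of _ u])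
    also have "\<dots> = v" using ud w0 by simp
    finally have "(T2 \<circ> T1) u = v" using T1 T2 u2_def by simp
    moreover have "T2 \<circ> T1 \<in> Sp" using Sp_comp T1 T2 by blast
    ultimately show ?thesis by blast
  qed
qed


lemma elem_prime:
  assumes x: "x \<in> carrier K" "x \<noteq> \<one>"
  shows "\<exists>(p::nat) (k::nat). prime p \<and> x [^] k \<noteq> \<one> \<and> (x [^] k) [^] p = \<one>"
proof -
  define n where "n = ord x"
  have n0: "n > 0" using ord_ge_1[OF fin x(1)] n_def by simp
  have n1: "n \<noteq> 1" using ord_eq_1[OF x(1)] x(2) n_def by simp
  obtain p where p: "prime p" "p dvd n" using prime_factor_nat[OF n1] by blast
  have p1: "p > 1" using p prime_gt_1_nat by blast
  define k where "k = n div p"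
  have kp: "k * p = n" using p k_def by simp
  have k0: "0 < k" using kp n0 by (cases k) auto
  have kn: "k < n" using kp p1 k0 by (metis mult.right_neutral mult_less_cancel1)
  have "(x [^] k) [^] p = \<one>" using x kp n_def by (simp add: nat_pow_pow)
  moreover have "x [^] k \<noteq> \<one>"
  proof
    assume "x [^] k = \<one>"
    hence "n dvd k" using pow_eq_id[OF x(1)] n_def by simp
    thus False using k0 kn by (simp add: nat_dvd_not_less)
  qed
  ultimately show ?thesis using p by blast
qed

lemma pw_card_less:
  assumes y: "y \<in> pw m" "y \<noteq> \<one>" "y [^] p = \<one>"
  shows "card (pw (p * m)) < card (pw m)"
proof -
  have fm: "finite (pw m)" using fin pw_sub finite_subset by blast
  have "pw (p * m) \<noteq> pw m"
  proof
    assume eq: "pw (p * m) = pw m"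
    have "(\<lambda>t. t [^] p) ` pw m = pw m"
    proof
      show "(\<lambda>t. t [^] p) ` pw m \<subseteq> pw m" using pw_powin eq by blast
      show "pw m \<subseteq> (\<lambda>t. t [^] p) ` pw m"
      proof
        fix s assume "s \<in> pw m"
        hence "s \<in> pw (p * m)" using eq by simp
        then obtain x where x: "x \<in> carrier K" "s = x [^] (p * m)" unfolding pw_def by auto
        have "s = (x [^] m) [^] p" using x by (simp add: nat_pow_pow mult.commute)
        moreover have "x [^] m \<in> pw m" using x unfolding pw_def by auto
        ultimately show "s \<in> (\<lambda>t. t [^] p) ` pw m" by blast
      qed
    qed
    hence "inj_on (\<lambda>t. t [^] p) (pw m)" using fm eq_card_imp_inj_on by metis
    moreover have "y [^] p = \<one> [^] p" using y by simp
    ultimately have "y = \<one>" using y(1) pw_one unfolding inj_on_def by blast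
    thus False using y by simp
  qed
  thus ?thesis using pw_mono[of p m] fm by (simp add: psubset_card_mono)
qed

lemma main_ind:
  "\<forall>m u v. card (pw m) = n \<longrightarrow> 0 < m \<longrightarrow> u \<in> pw m \<longrightarrow> v \<in> pw m \<longrightarrow>
     (\<forall>a b. 0 < a \<longrightarrow> 0 < b \<longrightarrow> (u [^] (a::nat) \<in> pw (b * m) \<longleftrightarrow> v [^] a \<in> pw (b * m)))
     \<longrightarrow> (\<exists>\<tau>\<in>Sp. \<tau> u = v)"
proof (induction n rule: less_induct)
  case (less n)
  show ?case
  proof (intro allI impI)
    fix m u v
    assume cn: "card (pw m) = n" and m: "0 < m" and u: "u \<in> pw m" and v: "v \<in> pw m"
      and inv: "\<forall>a b. 0 < a \<longrightarrow> 0 < b \<longrightarrow> (u [^] (a::nat) \<in> pw (b * m) \<longleftrightarrow> v [^] a \<in> pw (b * m))"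
    have uc: "u \<in> carrier K" and vc: "v \<in> carrier K" using u v pw_sub by auto
    show "\<exists>\<tau>\<in>Sp. \<tau> u = v"
    proof (cases "pw m \<subseteq> {\<one>}")
      case True
      hence "u = v" using u v by auto
      thus ?thesis using Sp_id by (intro bexI[of _ "\<lambda>x. x"]) auto
    next
      case False
      then obtain x where x: "x \<in> pw m" "x \<noteq> \<one>" by auto
      obtain p k :: nat where pk: "prime p" "x [^] k \<noteq> \<one>" "(x [^] k) [^] p = \<one>"
        using elem_prime[OF _ x(2)] x(1) pw_sub by blast
      have p0: "0 < p" using pk prime_gt_0_nat by blast
      have lt: "card (pw (p * m)) < n" using pw_card_less[OF pw_pow[OF x(1)] pk(2,3)] cn by simp
      have pm: "0 < p * m" using p0 m by simp
      have u1: "u [^] (1::nat) = u" and v1: "v [^] (1::nat) = v" using uc vc by auto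
      show ?thesis
      proof (cases "u \<in> pw (p * m)")
        case True
        have vin: "v \<in> pw (p * m)" using inv[rule_format, of 1 p] True p0 u1 v1 by simp
        have inv': "\<forall>a b. 0 < a \<longrightarrow> 0 < b \<longrightarrow> (u [^] (a::nat) \<in> pw (b * (p * m)) \<longleftrightarrow> v [^] a \<in> pw (b * (p * m)))"
          using inv p0 by (metis mult.assoc mult_pos_pos)
        have IH: "\<forall>m' u v. card (pw m') = card (pw (p * m)) \<longrightarrow> 0 < m' \<longrightarrow> u \<in> pw m' \<longrightarrow> v \<in> pw m' \<longrightarrow>
     (\<forall>a b. 0 < a \<longrightarrow> 0 < b \<longrightarrow> (u [^] (a::nat) \<in> pw (b * m') \<longleftrightarrow> v [^] a \<in> pw (b * m')))
     \<longrightarrow> (\<exists>\<tau>\<in>Sp. \<tau> u = v)" using less.IH[OF lt] .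
        show ?thesis using IH[THEN spec, THEN spec, THEN spec, of "p * m" u v] pm True vin inv' by blast
      next
        case False
        have nv: "v \<notin> pw (p * m)" using inv[rule_format, of 1 p] False p0 u1 v1 by simp
        have up: "u [^] p \<in> pw (p * m)" and vp: "v [^] p \<in> pw (p * m)"
          using pw_powin u v by auto
        have inv': "\<forall>a b. 0 < a \<longrightarrow> 0 < b \<longrightarrow> ((u [^] p) [^] (a::nat) \<in> pw (b * (p * m)) \<longleftrightarrow> (v [^] p) [^] a \<in> pw (b * (p * m)))"
        proof (intro allI impI)
          fix a b :: nat assume ab: "0 < a" "0 < b"
          have "(u [^] p) [^] a = u [^] (p * a)" "(v [^] p) [^] a = v [^] (p * a)"
            using uc vc by (simp_all add: nat_pow_pow)
          moreover have "b * (p * m) = (b * p) * m" by simp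
          ultimately show "((u [^] p) [^] a \<in> pw (b * (p * m)) \<longleftrightarrow> (v [^] p) [^] a \<in> pw (b * (p * m)))"
            using inv[rule_format, of "p * a" "b * p"] ab p0 by (simp add: mult.assoc)
        qed
        obtain \<tau> where tau: "\<tau> \<in> Sp" "\<tau> (u [^] p) = v [^] p"
        proof -
          have IH: "\<forall>m' u v. card (pw m') = card (pw (p * m)) \<longrightarrow> 0 < m' \<longrightarrow> u \<in> pw m' \<longrightarrow> v \<in> pw m' \<longrightarrow>
     (\<forall>a b. 0 < a \<longrightarrow> 0 < b \<longrightarrow> (u [^] (a::nat) \<in> pw (b * m') \<longleftrightarrow> v [^] a \<in> pw (b * m')))
     \<longrightarrow> (\<exists>\<tau>\<in>Sp. \<tau> u = v)" using less.IH[OF lt] .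
          show ?thesis using IH[THEN spec, THEN spec, THEN spec, of "p * m" "u [^] p" "v [^] p"] pm up vp inv' that by blast
        qed
        have tiso: "\<tau> \<in> iso K K" using tau unfolding Sp_def by auto
        obtain x0 where x0: "x0 \<in> carrier K" "u = x0 [^] m" using u unfolding pw_def by auto
        have u'm: "\<tau> u \<in> pw m"
          using x0 iso_pow[OF tiso x0(1)] iso_carrier[OF tiso x0(1)] unfolding pw_def by auto
        have u'n: "\<tau> u \<notin> pw (p * m)"
        proof
          assume "\<tau> u \<in> pw (p * m)"
          then obtain y where y: "y \<in> carrier K" "\<tau> u = y [^] (p * m)" unfolding pw_def by auto
          have "y \<in> \<tau> ` carrier K" using tiso y unfolding iso_def bij_betw_def by auto
          then obtain y0 where y0: "y0 \<in> carrier K" "y = \<tau> y0" by auto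
          have "\<tau> u = \<tau> (y0 [^] (p * m))" using y y0 iso_pow[OF tiso y0(1)] by simp
          moreover have "inj_on \<tau> (carrier K)" using tiso unfolding iso_def bij_betw_def by simp
          ultimately have "u = y0 [^] (p * m)" using uc y0 by (simp add: inj_on_def)
          thus False using False y0 unfolding pw_def by auto
        qed
        have u'p: "\<tau> u [^] p = v [^] p" using tau iso_pow[OF tiso uc] by simp
        obtain T where T: "T \<in> Sp" "T (\<tau> u) = v"
          using final_step[OF pk(1) m u'm v u'n nv u'p] by blast
        have "(T \<circ> \<tau>) u = v" using T by simp
        thus ?thesis using Sp_comp[OF T(1) tau(1)] by blast
      qed
    qed
  qed
qed

lemma orbit:
  assumes u: "u \<in> carrier K" and s: "\<sigma> \<in> iso K K"
  shows "\<exists>\<tau>\<in>Sp. \<tau> u = \<sigma> u"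
proof -
  have su: "\<sigma> u \<in> carrier K" using iso_carrier[OF s u] .
  have inv: "\<forall>a b. 0 < a \<longrightarrow> 0 < b \<longrightarrow> (u [^] (a::nat) \<in> pw (b * 1) \<longleftrightarrow> \<sigma> u [^] a \<in> pw (b * 1))"
  proof (intro allI impI)
    fix a b :: nat
    show "(u [^] a \<in> pw (b * 1) \<longleftrightarrow> \<sigma> u [^] a \<in> pw (b * 1))"
    proof
      assume "u [^] a \<in> pw (b * 1)"
      then obtain x where x: "x \<in> carrier K" "u [^] a = x [^] b" unfolding pw_def by auto
      have "\<sigma> u [^] a = \<sigma> x [^] b" using iso_pow[OF s u, of a] iso_pow[OF s x(1), of b] x by simp
      thus "\<sigma> u [^] a \<in> pw (b * 1)" using iso_carrier[OF s x(1)] unfolding pw_def by auto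
    next
      assume "\<sigma> u [^] a \<in> pw (b * 1)"
      then obtain y where y: "y \<in> carrier K" "\<sigma> u [^] a = y [^] b" unfolding pw_def by auto
      have "y \<in> \<sigma> ` carrier K" using s y unfolding iso_def bij_betw_def by auto
      then obtain y0 where y0: "y0 \<in> carrier K" "y = \<sigma> y0" by auto
      have "\<sigma> (u [^] a) = \<sigma> (y0 [^] b)" using y y0 iso_pow[OF s u] iso_pow[OF s y0(1)] by simp
      moreover have "inj_on \<sigma> (carrier K)" using s unfolding iso_def bij_betw_def by simp
      ultimately have "u [^] a = y0 [^] b" using u y0 by (simp add: inj_on_def)
      thus "u [^] a \<in> pw (b * 1)" using y0 unfolding pw_def by auto
    qed
  qed
  show ?thesis using main_ind[rule_format, OF refl, of 1 u "\<sigma> u"] inv u su pw_1 by simp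
qed

end



definition ischar :: "('a, 'b) monoid_scheme \<Rightarrow> 'a set \<Rightarrow> ('a \<Rightarrow> complex) \<Rightarrow> bool" where
  "ischar G H \<chi> \<longleftrightarrow> (\<forall>x\<in>H. cmod (\<chi> x) = 1) \<and> (\<forall>x\<in>H. \<forall>y\<in>H. \<chi> (x \<otimes>\<^bsub>G\<^esub> y) = \<chi> x * \<chi> y)"

lemma root_exists: assumes "cmod c = 1" "0 < r"
  shows "\<exists>z. cmod z = 1 \<and> z ^ r = c"
proof -
  define z where "z = cis (Arg c / real r)"
  have "z ^ r = cis (Arg c)" using assms by (simp add: z_def DeMoivre)
  also have "\<dots> = sgn c" using assms by (intro cis_Arg) auto
  also have "\<dots> = c" using assms by (simp add: sgn_eq)
  finally have e: "z ^ r = c" .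
  have "cmod z = 1" by (simp add: z_def)
  thus ?thesis using e by blast
qed

context comm_group
begin

lemma ischar_one: assumes "subgroup S G" "ischar G S \<chi>" shows "\<chi> \<one> = 1"
proof -
  have o: "\<one> \<in> S" using assms subgroup.one_closed by blast
  have "\<chi> \<one> = \<chi> (\<one> \<otimes> \<one>)" by simp
  also have "\<dots> = \<chi> \<one> * \<chi> \<one>" using assms(2) o unfolding ischar_def by blast
  finally have "\<chi> \<one> = \<chi> \<one> * \<chi> \<one>" .
  moreover have "cmod (\<chi> \<one>) = 1" using assms(2) o unfolding ischar_def by blast
  hence "\<chi> \<one> \<noteq> 0" by auto
  ultimately show ?thesis by simp
qed

lemma sub_pow: assumes "subgroup S G" "x \<in> S" shows "x [^] (n::nat) \<in> S"
proof (induction n)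
  case 0 thus ?case using subgroup.one_closed[OF assms(1)] by simp
next
  case (Suc n) thus ?case using subgroup.m_closed[OF assms(1)] assms(2) by simp
qed

lemma ischar_pow: assumes "subgroup S G" "ischar G S \<chi>" "x \<in> S"
  shows "\<chi> (x [^] (n::nat)) = \<chi> x ^ n"
proof (induction n)
  case 0 thus ?case using ischar_one[OF assms(1,2)] by simp
next
  case (Suc n)
  have "x [^] n \<in> S" using sub_pow[OF assms(1) assms(3)] .
  hence "\<chi> (x [^] n \<otimes> x) = \<chi> (x [^] n) * \<chi> x" using assms(2,3) unfolding ischar_def by blast
  hence "\<chi> (x [^] Suc n) = \<chi> (x [^] n) * \<chi> x" by simp
  thus ?case using Suc by simp
qed

lemma ischar_inv: assumes "subgroup S G" "ischar G S \<chi>" "x \<in> S"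
  shows "\<chi> (inv x) = inverse (\<chi> x)"
proof -
  have ix: "inv x \<in> S" using subgroup.m_inv_closed[OF assms(1,3)] .
  have xc: "x \<in> carrier G" using subgroup.mem_carrier[OF assms(1,3)] .
  have "\<chi> (inv x \<otimes> x) = \<chi> (inv x) * \<chi> x" using assms(2) ix assms(3) unfolding ischar_def by blast
  hence "\<chi> (inv x) * \<chi> x = \<chi> (inv x \<otimes> x)" by simp
  also have "\<dots> = 1" using xc ischar_one[OF assms(1,2)] by simp
  moreover have "cmod (\<chi> x) = 1" using assms(2,3) unfolding ischar_def by blast
  hence "\<chi> x \<noteq> 0" by auto
  ultimately show ?thesis by (simp add: field_simps)
qed

lemma dual_ischar: "\<chi> \<in> dual G \<Longrightarrow> ischar G (carrier G) \<chi>"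
  unfolding dual_def ischar_def by auto

lemma dual_pow: assumes "\<chi> \<in> dual G" "x \<in> carrier G" shows "\<chi> (x [^] (n::nat)) = \<chi> x ^ n"
  using ischar_pow[OF subgroup_self dual_ischar[OF assms(1)] assms(2)] .

lemma finite_inv_closed:
  assumes fin: "finite (carrier G)" and S: "S \<subseteq> carrier G" "\<And>a b. a \<in> S \<Longrightarrow> b \<in> S \<Longrightarrow> a \<otimes> b \<in> S" "\<one> \<in> S"
    and x: "x \<in> S"
  shows "inv x \<in> S"
proof -
  have xc: "x \<in> carrier G" using x S by auto
  have pw: "x [^] (n::nat) \<in> S" for n by (induction n) (use S x in auto)
  define n where "n = ord x"
  have n1: "n \<ge> 1" using ord_ge_1[OF fin xc] n_def by simp
  have "x [^] (n - 1) \<otimes> x = x [^] Suc (n - 1)" by simp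
  also have "Suc (n - 1) = n" using n1 by simp
  finally have "x [^] (n - 1) \<otimes> x = x [^] n" .
  also have "\<dots> = \<one>" using xc n_def by simp
  finally have "inv x = x [^] (n - 1)" using xc by (intro inv_equality) auto
  thus ?thesis using pw by simp
qed


lemma ext_step:
  assumes fin: "finite (carrier G)" and S: "subgroup S G" and chi: "ischar G S \<chi>"
    and g: "g \<in> carrier G" "g \<notin> S"
    and r_def: "r = (LEAST r. 0 < r \<and> g [^] r \<in> S)"
    and z: "cmod z = 1" "z ^ r = \<chi> (g [^] r)"
  shows "\<exists>S' \<chi>'. subgroup S' G \<and> S \<subseteq> S' \<and> g \<in> S' \<and> ischar G S' \<chi>' \<and>
            (\<forall>s\<in>S. \<chi>' s = \<chi> s) \<and> \<chi>' g = z"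
proof -
  have Sc: "S \<subseteq> carrier G" using subgroup.subset[OF S] .
  have ex: "0 < ord g \<and> g [^] ord g \<in> S"
    using ord_ge_1[OF fin g(1)] subgroup.one_closed[OF S] g by simp
  have r: "0 < r" "g [^] r \<in> S" using LeastI_ex[of "\<lambda>r. 0 < r \<and> g [^] r \<in> S"] ex r_def by blast+
  have rmin: "g [^] j \<notin> S" if "0 < j" "j < r" for j
    using not_less_Least[of j "\<lambda>r. 0 < r \<and> g [^] r \<in> S"] that r_def by blast
  have rdvd: "r dvd j" if "g [^] (j::nat) \<in> S" for j
  proof -
    have gr: "(g [^] r) [^] (j div r) \<in> S" using sub_pow[OF S r(2)] .
    have "(g [^] r) [^] (j div r) \<otimes> g [^] (j mod r) = g [^] (r * (j div r) + j mod r)"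
      using g(1) by (simp only: nat_pow_pow nat_pow_mult)
    also have "\<dots> = g [^] j" by simp
    finally have "g [^] j = (g [^] r) [^] (j div r) \<otimes> g [^] (j mod r)" by simp
    hence "g [^] (j mod r) = inv ((g [^] r) [^] (j div r)) \<otimes> g [^] j"
      using g by (simp add: inv_solve_left)
    also have "\<dots> \<in> S" using gr that subgroup.m_inv_closed[OF S] subgroup.m_closed[OF S] by simp
    finally have "g [^] (j mod r) \<in> S" .
    moreover have "j mod r < r" using r(1) by simp
    ultimately have "\<not> (0 < j mod r)" using rmin[of "j mod r"] by blast
    thus ?thesis by auto
  qed
  have chiS: "\<chi> (s \<otimes> t) = \<chi> s * \<chi> t" if "s \<in> S" "t \<in> S" for s t
    using chi that unfolding ischar_def by blast
  have chiN: "cmod (\<chi> s) = 1" if "s \<in> S" for s using chi that unfolding ischar_def by blast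
  have chirq: "\<chi> (g [^] (r * q)) = z ^ (r * q)" for q
  proof -
    have "\<chi> (g [^] (r * q)) = \<chi> ((g [^] r) [^] q)" using g by (simp add: nat_pow_pow)
    also have "\<dots> = \<chi> (g [^] r) ^ q" using ischar_pow[OF S chi r(2)] .
    finally show ?thesis using z by (simp add: power_mult)
  qed
  have wd1: "\<chi> s * z ^ j = \<chi> s' * z ^ k"
    if s: "s \<in> S" "s' \<in> S" and eq: "s \<otimes> g [^] j = s' \<otimes> g [^] k" and kj: "k \<le> j" for s s' j k
  proof -
    have sc: "s \<in> carrier G" "s' \<in> carrier G" using s Sc by auto
    have "g [^] j = g [^] k \<otimes> g [^] (j - k)" using g kj by (simp add: nat_pow_mult)
    hence "(s \<otimes> g [^] (j - k)) \<otimes> g [^] k = s' \<otimes> g [^] k"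
      using eq g sc by (simp add: m_ac)
    hence e2: "s \<otimes> g [^] (j - k) = s'" using g sc by simp
    hence "g [^] (j - k) = inv s \<otimes> s'" using g sc by (simp add: inv_solve_left)
    also have "\<dots> \<in> S" using s subgroup.m_inv_closed[OF S] subgroup.m_closed[OF S] by simp
    finally have gS: "g [^] (j - k) \<in> S" .
    then obtain q where q: "j - k = r * q" using rdvd by blast
    have "\<chi> s' = \<chi> s * \<chi> (g [^] (j - k))" using e2 chiS s gS by metis
    also have "\<chi> (g [^] (j - k)) = z ^ (j - k)" using q chirq by simp
    finally have "\<chi> s' * z ^ k = \<chi> s * (z ^ (j - k) * z ^ k)" by simp
    also have "z ^ (j - k) * z ^ k = z ^ j" using kj by (simp add: power_add[symmetric])
    finally show ?thesis by simp
  qed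
  have wd: "\<chi> s * z ^ j = \<chi> s' * z ^ k"
    if "s \<in> S" "s' \<in> S" "s \<otimes> g [^] j = s' \<otimes> g [^] k" for s s' j k
  proof (cases "k \<le> j")
    case True thus ?thesis using wd1 that by blast
  next
    case False thus ?thesis using wd1[of s' s k j] that by simp
  qed
  define S' where "S' = {s \<otimes> g [^] (j::nat) | s j. s \<in> S}"
  define \<chi>' where "\<chi>' x = (SOME c. \<exists>s\<in>S. \<exists>j::nat. x = s \<otimes> g [^] j \<and> c = \<chi> s * z ^ j)" for x
  have chi'_eq: "\<chi>' (s \<otimes> g [^] j) = \<chi> s * z ^ j" if "s \<in> S" for s j
  proof -
    have "\<exists>s'\<in>S. \<exists>j'::nat. s \<otimes> g [^] j = s' \<otimes> g [^] j' \<and> \<chi>' (s \<otimes> g [^] j) = \<chi> s' * z ^ j'"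
      unfolding \<chi>'_def by (rule someI_ex) (use that in blast)
    then obtain s' j' where "s' \<in> S" "s \<otimes> g [^] j = s' \<otimes> g [^] j'" "\<chi>' (s \<otimes> g [^] j) = \<chi> s' * z ^ j'"
      by blast
    thus ?thesis using wd[OF that] by metis
  qed
  have S'c: "S' \<subseteq> carrier G" unfolding S'_def using Sc g by auto
  have S'm: "a \<otimes> b \<in> S'" if ha: "a \<in> S'" and hb: "b \<in> S'" for a b
  proof -
    obtain s1 j1 where 1: "s1 \<in> S" "a = s1 \<otimes> g [^] (j1::nat)" using ha unfolding S'_def by blast
    obtain s2 j2 where 2: "s2 \<in> S" "b = s2 \<otimes> g [^] (j2::nat)" using hb unfolding S'_def by blast
    have "a \<otimes> b = (s1 \<otimes> s2) \<otimes> g [^] (j1 + j2)"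
      using 1 2 Sc g by (simp add: nat_pow_mult[symmetric] m_ac subset_iff)
    moreover have "s1 \<otimes> s2 \<in> S" using 1 2 subgroup.m_closed[OF S] by simp
    ultimately show ?thesis unfolding S'_def by blast
  qed
  have S'1: "\<one> \<in> S'" unfolding S'_def
    using subgroup.one_closed[OF S] by (intro CollectI exI[of _ \<one>] exI[of _ "0::nat"]) simp
  have S'sub: "subgroup S' G"
  proof (rule subgroupI)
    show "S' \<subseteq> carrier G" by fact
    show "S' \<noteq> {}" using S'1 by blast
    show "inv a \<in> S'" if "a \<in> S'" for a using finite_inv_closed[OF fin S'c S'm S'1 that] .
    show "a \<otimes> b \<in> S'" if "a \<in> S'" "b \<in> S'" for a b using S'm that .
  qed
  have SS': "S \<subseteq> S'"
  proof
    fix s assume "s \<in> S"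
    hence "s = s \<otimes> g [^] (0::nat)" "s \<in> S" using Sc by auto
    thus "s \<in> S'" unfolding S'_def by blast
  qed
  have gS': "g \<in> S'"
  proof -
    have "g = \<one> \<otimes> g [^] (1::nat)" using g by simp
    thus ?thesis unfolding S'_def using subgroup.one_closed[OF S] by blast
  qed
  have ch': "ischar G S' \<chi>'"
    unfolding ischar_def
  proof (intro conjI ballI)
    fix a assume "a \<in> S'"
    then obtain s j where 1: "s \<in> S" "a = s \<otimes> g [^] (j::nat)" unfolding S'_def by blast
    show "cmod (\<chi>' a) = 1" using 1 chi'_eq chiN z by (simp add: norm_mult norm_power)
  next
    fix a b assume "a \<in> S'" "b \<in> S'"
    then obtain s1 j1 s2 j2 where 1: "s1 \<in> S" "a = s1 \<otimes> g [^] (j1::nat)"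
      and 2: "s2 \<in> S" "b = s2 \<otimes> g [^] (j2::nat)" unfolding S'_def by blast
    have "a \<otimes> b = (s1 \<otimes> s2) \<otimes> g [^] (j1 + j2)"
      using 1 2 Sc g by (simp add: nat_pow_mult[symmetric] m_ac subset_iff)
    moreover have "s1 \<otimes> s2 \<in> S" using 1 2 subgroup.m_closed[OF S] by simp
    ultimately have "\<chi>' (a \<otimes> b) = \<chi> (s1 \<otimes> s2) * z ^ (j1 + j2)" using chi'_eq by simp
    also have "\<dots> = (\<chi> s1 * z ^ j1) * (\<chi> s2 * z ^ j2)" using chiS 1 2 by (simp add: power_add)
    finally show "\<chi>' (a \<otimes> b) = \<chi>' a * \<chi>' b" using 1 2 chi'_eq by simp
  qed
  have "\<chi>' s = \<chi> s" if "s \<in> S" for s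
    using chi'_eq[OF that, of 0] that Sc by auto
  moreover have "\<chi>' g = z"
    using chi'_eq[OF subgroup.one_closed[OF S], of 1] g ischar_one[OF S chi] by simp
  ultimately show ?thesis using S'sub SS' gS' ch' by blast
qed


lemma least_pow:
  assumes fin: "finite (carrier G)" and S: "subgroup S G" and g: "g \<in> carrier G"
  shows "0 < (LEAST r::nat. 0 < r \<and> g [^] r \<in> S) \<and> g [^] (LEAST r::nat. 0 < r \<and> g [^] r \<in> S) \<in> S"
proof -
  have ex: "0 < ord g \<and> g [^] ord g \<in> S"
    using ord_ge_1[OF fin g] subgroup.one_closed[OF S] g by simp
  hence "\<exists>r::nat. 0 < r \<and> g [^] r \<in> S" by blast
  from LeastI_ex[OF this] show ?thesis .
qed

lemma char_extend:
  assumes fin: "finite (carrier G)"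
  shows "subgroup S G \<Longrightarrow> ischar G S \<chi> \<Longrightarrow> \<exists>\<psi>\<in>dual G. \<forall>s\<in>S. \<psi> s = \<chi> s"
proof (induction "card (carrier G - S)" arbitrary: S \<chi> rule: less_induct)
  case less
  have Sc: "S \<subseteq> carrier G" using subgroup.subset[OF less.prems(1)] .
  show ?case
  proof (cases "S = carrier G")
    case True
    define \<psi> where "\<psi> = restrict \<chi> (carrier G)"
    have "\<psi> \<in> dual G"
      unfolding dual_def \<psi>_def using less.prems(2) True unfolding ischar_def by auto
    moreover have "\<forall>s\<in>S. \<psi> s = \<chi> s" using True \<psi>_def by simp
    ultimately show ?thesis by blast
  next
    case False
    then obtain g where g: "g \<in> carrier G" "g \<notin> S" using Sc by blast
    define r where "r = (LEAST r::nat. 0 < r \<and> g [^] r \<in> S)"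
    have r: "0 < r" "g [^] r \<in> S" using least_pow[OF fin less.prems(1) g(1)] r_def by auto
    have "cmod (\<chi> (g [^] r)) = 1" using less.prems(2) r unfolding ischar_def by blast
    then obtain z where z: "cmod z = 1" "z ^ r = \<chi> (g [^] r)" using root_exists r(1) by blast
    obtain S' \<chi>' where S': "subgroup S' G" "S \<subseteq> S'" "g \<in> S'" "ischar G S' \<chi>'"
        "\<forall>s\<in>S. \<chi>' s = \<chi> s"
      using ext_step[OF fin less.prems(1,2) g r_def z] by blast
    have "carrier G - S' \<subset> carrier G - S" using S' g by blast
    hence lt: "card (carrier G - S') < card (carrier G - S)"
      using fin by (simp add: psubset_card_mono)
    obtain \<psi> where "\<psi> \<in> dual G" "\<forall>s\<in>S'. \<psi> s = \<chi>' s" using less.hyps[OF lt S'(1,4)] by blast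
    thus ?thesis using S'(2,5) by (intro bexI[of _ \<psi>]) auto
  qed
qed

lemma pw_subgroup: "subgroup ((\<lambda>x. x [^] (m::nat)) ` carrier G) G"
proof (rule subgroupI)
  show "(\<lambda>x. x [^] m) ` carrier G \<subseteq> carrier G" by auto
  show "(\<lambda>x. x [^] m) ` carrier G \<noteq> {}" by auto
  fix a b assume a: "a \<in> (\<lambda>x. x [^] m) ` carrier G"
  then obtain x where x: "x \<in> carrier G" "a = x [^] m" by blast
  have "inv a = (inv x) [^] m" using x by (simp add: nat_pow_inv)
  thus "inv a \<in> (\<lambda>x. x [^] m) ` carrier G" using x by auto
  assume "b \<in> (\<lambda>x. x [^] m) ` carrier G"
  then obtain y where y: "y \<in> carrier G" "b = y [^] m" by blast
  have "a \<otimes> b = (x \<otimes> y) [^] m" using x y by (simp add: nat_pow_distrib)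
  thus "a \<otimes> b \<in> (\<lambda>x. x [^] m) ` carrier G" using x y by auto
qed

lemma dual_mult: "\<alpha> \<in> dual G \<Longrightarrow> x \<in> carrier G \<Longrightarrow> y \<in> carrier G \<Longrightarrow> \<alpha> (x \<otimes> y) = \<alpha> x * \<alpha> y"
  unfolding dual_def by blast

lemma dual_norm: "\<alpha> \<in> dual G \<Longrightarrow> x \<in> carrier G \<Longrightarrow> cmod (\<alpha> x) = 1"
  unfolding dual_def by auto

lemma E1:
  assumes fin: "finite (carrier G)" and al: "\<alpha> \<in> dual G"
    and triv: "\<forall>b\<in>carrier G. b [^] (m::nat) = \<one> \<longrightarrow> \<alpha> b = 1"
  shows "\<exists>\<gamma>\<in>dual G. \<forall>x\<in>carrier G. \<gamma> x ^ m = \<alpha> x"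
proof -
  define H where "H = (\<lambda>x. x [^] m) ` carrier G"
  have H: "subgroup H G" unfolding H_def by (rule pw_subgroup)
  have wd: "\<alpha> x = \<alpha> y" if "x \<in> carrier G" "y \<in> carrier G" "x [^] m = y [^] m" for x y
  proof -
    have "(x \<otimes> inv y) [^] m = x [^] m \<otimes> inv (y [^] m)" using that by (simp add: nat_pow_distrib nat_pow_inv)
    also have "\<dots> = \<one>" using that by simp
    finally have "\<alpha> (x \<otimes> inv y) = 1" using triv that by simp
    hence "\<alpha> x * inverse (\<alpha> y) = 1"
      using dual_mult[OF al] ischar_inv[OF subgroup_self dual_ischar[OF al]] that by simp
    moreover have "\<alpha> y \<noteq> 0" using dual_norm[OF al that(2)] by auto
    ultimately show ?thesis by (simp add: field_simps)
  qed
  define \<chi> where "\<chi> h = \<alpha> (SOME x. x \<in> carrier G \<and> x [^] m = h)" for h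
  have chi: "\<chi> (x [^] m) = \<alpha> x" if "x \<in> carrier G" for x
  proof -
    have "\<exists>x'. x' \<in> carrier G \<and> x' [^] m = x [^] m" using that by blast
    hence "(SOME x'. x' \<in> carrier G \<and> x' [^] m = x [^] m) \<in> carrier G \<and>
           (SOME x'. x' \<in> carrier G \<and> x' [^] m = x [^] m) [^] m = x [^] m"
      by (rule someI_ex)
    thus ?thesis unfolding \<chi>_def using wd that by blast
  qed
  have "ischar G H \<chi>" unfolding ischar_def
  proof (intro conjI ballI)
    fix a assume "a \<in> H"
    then obtain x where x: "x \<in> carrier G" "a = x [^] m" unfolding H_def by blast
    show "cmod (\<chi> a) = 1" using x chi dual_norm[OF al] by simp
  next
    fix a b assume "a \<in> H" "b \<in> H"
    then obtain x y where x: "x \<in> carrier G" "a = x [^] m" and y: "y \<in> carrier G" "b = y [^] m"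
      unfolding H_def by blast
    have "a \<otimes> b = (x \<otimes> y) [^] m" using x y by (simp add: nat_pow_distrib)
    thus "\<chi> (a \<otimes> b) = \<chi> a * \<chi> b" using x y chi dual_mult[OF al] by simp
  qed
  then obtain \<psi> where psi: "\<psi> \<in> dual G" "\<forall>s\<in>H. \<psi> s = \<chi> s" using char_extend[OF fin H] by blast
  have "\<psi> x ^ m = \<alpha> x" if "x \<in> carrier G" for x
  proof -
    have "\<psi> x ^ m = \<psi> (x [^] m)" using dual_pow[OF psi(1) that] by simp
    also have "\<dots> = \<chi> (x [^] m)" using psi(2) that unfolding H_def by blast
    finally show ?thesis using chi that by simp
  qed
  thus ?thesis using psi(1) by blast
qed

lemma E2:
  assumes fin: "finite (carrier G)" and a: "a \<in> carrier G"
    and ann: "\<forall>\<beta>\<in>dual G. (\<forall>x\<in>carrier G. \<beta> x ^ (m::nat) = 1) \<longrightarrow> \<beta> a = 1"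
  shows "\<exists>a0\<in>carrier G. a0 [^] m = a"
proof (rule ccontr)
  assume na: "\<not> (\<exists>a0\<in>carrier G. a0 [^] m = a)"
  define H where "H = (\<lambda>x. x [^] m) ` carrier G"
  have H: "subgroup H G" unfolding H_def by (rule pw_subgroup)
  have aH: "a \<notin> H" using na unfolding H_def by blast
  have c1: "ischar G H (\<lambda>_. 1)" unfolding ischar_def by simp
  define r where "r = (LEAST r::nat. 0 < r \<and> a [^] r \<in> H)"
  have r: "0 < r" "a [^] r \<in> H" using least_pow[OF fin H a] r_def by auto
  have r1: "r \<noteq> 1" using r aH a by auto
  define z where "z = rt r 1"
  have zn: "cmod z = 1" by (simp add: z_def rt_def)
  have zr: "z ^ r = 1" unfolding z_def rt_pow using rt_mod[OF r(1), of r] by simp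
  have z1: "z \<noteq> 1"
  proof
    assume "z = 1"
    hence "rt r 1 = rt r 0" by (simp add: z_def)
    hence "1 mod r = 0 mod r" using rt_eq r(1) by blast
    thus False using r1 r(1) by simp
  qed
  obtain S' \<chi>' where S': "subgroup S' G" "H \<subseteq> S'" "a \<in> S'" "ischar G S' \<chi>'"
      "\<forall>s\<in>H. \<chi>' s = 1" "\<chi>' a = z"
    using ext_step[OF fin H c1 a aH r_def zn] zr by auto
  obtain \<psi> where psi: "\<psi> \<in> dual G" "\<forall>s\<in>S'. \<psi> s = \<chi>' s" using char_extend[OF fin S'(1,4)] by blast
  have "\<forall>x\<in>carrier G. \<psi> x ^ m = 1"
  proof
    fix x assume x: "x \<in> carrier G"
    have "x [^] m \<in> H" using x unfolding H_def by blast
    hence "\<psi> (x [^] m) = 1" using psi(2) S'(2,5) by auto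
    thus "\<psi> x ^ m = 1" using dual_pow[OF psi(1) x, of m] by simp
  qed
  hence "\<psi> a = 1" using ann psi(1) by blast
  thus False using psi(2) S'(3,6) z1 by simp
qed


lemma dual_ext: "\<chi> \<in> dual G \<Longrightarrow> restrict \<chi> (carrier G) = \<chi>"
  unfolding dual_def by (auto simp: extensional_restrict PiE_def)

lemma KK_carrier [simp]: "carrier (KK G) = carrier G \<times> dual G" by (simp add: KK_def)
lemma KK_mult [simp]: "(a, \<chi>) \<otimes>\<^bsub>KK G\<^esub> (b, \<psi>) = (a \<otimes> b, \<lambda>x\<in>carrier G. \<chi> x * \<psi> x)"
  by (simp add: KK_def)
lemma KK_one [simp]: "\<one>\<^bsub>KK G\<^esub> = (\<one>, \<lambda>x\<in>carrier G. 1)" by (simp add: KK_def)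

lemma dual_prod: assumes "\<chi> \<in> dual G" "\<psi> \<in> dual G" shows "(\<lambda>x\<in>carrier G. \<chi> x * \<psi> x) \<in> dual G"
  using assms unfolding dual_def by (auto simp: norm_mult PiE_iff)

lemma dual_one: "(\<lambda>x\<in>carrier G. 1) \<in> dual G"
  unfolding dual_def by auto

lemma dual_invc: assumes "\<chi> \<in> dual G" shows "(\<lambda>x\<in>carrier G. inverse (\<chi> x)) \<in> dual G"
  using assms unfolding dual_def by (auto simp: norm_inverse)

lemma KK_comm_group: "comm_group (KK G)"
proof (rule comm_groupI)
  fix x y z assume x: "x \<in> carrier (KK G)" and y: "y \<in> carrier (KK G)" and z: "z \<in> carrier (KK G)"
  obtain a \<chi> where 1: "x = (a, \<chi>)" "a \<in> carrier G" "\<chi> \<in> dual G" using x by auto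
  obtain b \<psi> where 2: "y = (b, \<psi>)" "b \<in> carrier G" "\<psi> \<in> dual G" using y by auto
  obtain c \<phi> where 3: "z = (c, \<phi>)" "c \<in> carrier G" "\<phi> \<in> dual G" using z by auto
  show "x \<otimes>\<^bsub>KK G\<^esub> y \<in> carrier (KK G)" using 1 2 dual_prod by simp
  show "x \<otimes>\<^bsub>KK G\<^esub> y \<otimes>\<^bsub>KK G\<^esub> z = x \<otimes>\<^bsub>KK G\<^esub> (y \<otimes>\<^bsub>KK G\<^esub> z)"
    using 1 2 3 by (auto simp: m_assoc restrict_def mult.assoc)
  show "x \<otimes>\<^bsub>KK G\<^esub> y = y \<otimes>\<^bsub>KK G\<^esub> x"
    using 1 2 by (auto simp: m_comm mult.commute)
  have ext: "\<chi> t = undefined" if "t \<notin> carrier G" for t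
    using 1(3) that unfolding dual_def by (auto simp: PiE_def extensional_def)
  show "\<one>\<^bsub>KK G\<^esub> \<otimes>\<^bsub>KK G\<^esub> x = x"
    using 1 ext by (auto simp: restrict_def fun_eq_iff)
  have "(inv a, \<lambda>x\<in>carrier G. inverse (\<chi> x)) \<otimes>\<^bsub>KK G\<^esub> x = \<one>\<^bsub>KK G\<^esub>"
  proof -
    have nz: "\<chi> t \<noteq> 0" if "t \<in> carrier G" for t
      using dual_norm[OF 1(3) that] by auto
    show ?thesis using 1 nz by (auto simp: restrict_def fun_eq_iff)
  qed
  moreover have "(inv a, \<lambda>x\<in>carrier G. inverse (\<chi> x)) \<in> carrier (KK G)"
    using 1 dual_invc by simp
  ultimately show "\<exists>y\<in>carrier (KK G). y \<otimes>\<^bsub>KK G\<^esub> x = \<one>\<^bsub>KK G\<^esub>" by blast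
next
  show "\<one>\<^bsub>KK G\<^esub> \<in> carrier (KK G)" using dual_one by simp
qed

lemma KK_pow: assumes "a \<in> carrier G" "\<chi> \<in> dual G"
  shows "(a, \<chi>) [^]\<^bsub>KK G\<^esub> (n::nat) = (a [^] n, \<lambda>x\<in>carrier G. \<chi> x ^ n)"
proof (induction n)
  case 0 thus ?case by (simp add: restrict_def)
next
  case (Suc n) thus ?case by (simp add: restrict_def fun_eq_iff)
qed

lemma dual_finite: assumes fin: "finite (carrier G)" shows "finite (dual G)"
proof -
  define n where "n = order G"
  have n0: "0 < n" unfolding n_def order_def using fin one_closed
    by (metis card_gt_0_iff empty_iff)
  have "dual G \<subseteq> carrier G \<rightarrow>\<^sub>E {z::complex. z ^ n = 1}"
  proof
    fix \<chi> assume c: "\<chi> \<in> dual G"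
    have "\<chi> x ^ n = 1" if "x \<in> carrier G" for x
    proof -
      have "\<chi> x ^ n = \<chi> (x [^] n)" using dual_pow[OF c that] by simp
      also have "x [^] n = \<one>" using pow_order_eq_1[OF that] n_def by simp
      finally show ?thesis using ischar_one[OF subgroup_self dual_ischar[OF c]] by simp
    qed
    thus "\<chi> \<in> carrier G \<rightarrow>\<^sub>E {z::complex. z ^ n = 1}" using c unfolding dual_def by auto
  qed
  moreover have "finite (carrier G \<rightarrow>\<^sub>E {z::complex. z ^ n = 1})"
    using fin finite_roots_unity[of n] n0 by (intro finite_PiE) auto
  ultimately show ?thesis using finite_subset by blast
qed


lemma sympl_simp [simp]: "sympl (a, \<alpha>) (b, \<beta>) = \<alpha> b * inverse (\<beta> a)"
  by (simp add: sympl_def)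

lemma KK_ax:
  assumes fin: "finite (carrier G)" and m: "0 < m" and u: "u \<in> carrier (KK G)"
    and h: "\<forall>v\<in>carrier (KK G). v [^]\<^bsub>KK G\<^esub> (m::nat) = \<one>\<^bsub>KK G\<^esub> \<longrightarrow> sympl u v = 1"
  shows "\<exists>x\<in>carrier (KK G). u = x [^]\<^bsub>KK G\<^esub> m"
proof -
  obtain a \<alpha> where u': "u = (a, \<alpha>)" "a \<in> carrier G" "\<alpha> \<in> dual G" using u by auto
  have one1: "\<alpha> \<one> = 1" using ischar_one[OF subgroup_self dual_ischar[OF u'(3)]] .
  have t1: "\<forall>b\<in>carrier G. b [^] m = \<one> \<longrightarrow> \<alpha> b = 1"
  proof (intro ballI impI)
    fix b assume b: "b \<in> carrier G" "b [^] m = \<one>"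
    have "(b, \<lambda>x\<in>carrier G. 1) \<in> carrier (KK G)" using b dual_one by simp
    moreover have "(b, \<lambda>x\<in>carrier G. 1) [^]\<^bsub>KK G\<^esub> m = \<one>\<^bsub>KK G\<^esub>"
      using KK_pow[OF b(1) dual_one] b by (simp add: restrict_def fun_eq_iff)
    ultimately have "sympl u (b, \<lambda>x\<in>carrier G. 1) = 1" using h by blast
    thus "\<alpha> b = 1" using u' by simp
  qed
  have t2: "\<forall>\<beta>\<in>dual G. (\<forall>x\<in>carrier G. \<beta> x ^ m = 1) \<longrightarrow> \<beta> a = 1"
  proof (intro ballI impI)
    fix \<beta> assume \<beta>: "\<beta> \<in> dual G" "\<forall>x\<in>carrier G. \<beta> x ^ m = 1"
    have "(\<one>, \<beta>) \<in> carrier (KK G)" using \<beta> by simp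
    moreover have "(\<one>, \<beta>) [^]\<^bsub>KK G\<^esub> m = \<one>\<^bsub>KK G\<^esub>"
      using KK_pow[OF one_closed \<beta>(1)] \<beta>(2) by (simp add: restrict_def fun_eq_iff)
    ultimately have "sympl u (\<one>, \<beta>) = 1" using h by blast
    thus "\<beta> a = 1" using u' one1 by simp
  qed
  obtain \<gamma> where g: "\<gamma> \<in> dual G" "\<forall>x\<in>carrier G. \<gamma> x ^ m = \<alpha> x" using E1[OF fin u'(3) t1] by blast
  obtain a0 where a0: "a0 \<in> carrier G" "a0 [^] m = a" using E2[OF fin u'(2) t2] by blast
  have "(a0, \<gamma>) [^]\<^bsub>KK G\<^esub> m = (a, \<lambda>x\<in>carrier G. \<alpha> x)"
    using KK_pow[OF a0(1) g(1)] a0 g by (simp add: restrict_def fun_eq_iff)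
  also have "(\<lambda>x\<in>carrier G. \<alpha> x) = \<alpha>" using dual_ext[OF u'(3)] by simp
  finally have "u = (a0, \<gamma>) [^]\<^bsub>KK G\<^esub> m" using u' by simp
  moreover have "(a0, \<gamma>) \<in> carrier (KK G)" using a0 g by simp
  ultimately show ?thesis by blast
qed

lemma KK_symp: assumes fin: "finite (carrier G)" shows "symp (KK G) sympl"
proof (rule symp.intro[OF KK_comm_group], unfold_locales)
  show "finite (carrier (KK G))" using fin dual_finite[OF fin] by simp
next
  fix x y z assume x: "x \<in> carrier (KK G)" and y: "y \<in> carrier (KK G)" and z: "z \<in> carrier (KK G)"
  obtain a \<alpha> where 1: "x = (a, \<alpha>)" "a \<in> carrier G" "\<alpha> \<in> dual G" using x by auto
  obtain b \<beta> where 2: "y = (b, \<beta>)" "b \<in> carrier G" "\<beta> \<in> dual G" using y by auto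
  obtain c \<gamma> where 3: "z = (c, \<gamma>)" "c \<in> carrier G" "\<gamma> \<in> dual G" using z by auto
  show "sympl (x \<otimes>\<^bsub>KK G\<^esub> y) z = sympl x z * sympl y z"
    using 1 2 3 dual_mult[OF 3(3)] by (simp add: inverse_mult_distrib mult_ac)
  show "sympl x (y \<otimes>\<^bsub>KK G\<^esub> z) = sympl x y * sympl x z"
    using 1 2 3 dual_mult[OF 1(3)] by (simp add: inverse_mult_distrib mult_ac)
next
  fix x assume x: "x \<in> carrier (KK G)"
  obtain a \<alpha> where 1: "x = (a, \<alpha>)" "a \<in> carrier G" "\<alpha> \<in> dual G" using x by auto
  have "\<alpha> a \<noteq> 0" using dual_norm[OF 1(3,2)] by auto
  thus "sympl x x = 1" using 1 by simp
next
  fix m :: nat and u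
  assume "0 < m" "u \<in> carrier (KK G)"
    "\<forall>v\<in>carrier (KK G). v [^]\<^bsub>KK G\<^esub> m = \<one>\<^bsub>KK G\<^esub> \<longrightarrow> sympl u v = 1"
  thus "\<exists>x\<in>carrier (KK G). u = x [^]\<^bsub>KK G\<^esub> m" using KK_ax[OF fin] by blast
qed

end

theorem corollary5p5:
  fixes G :: "('a, 'b) monoid_scheme"
  assumes "comm_group G" and "finite (carrier G)" and "odd (card (carrier G))"
  shows "\<forall>u\<in>carrier (KK G).
           {\<sigma> u | \<sigma>. \<sigma> \<in> SpK G} = {\<sigma> u | \<sigma>. \<sigma> \<in> AutK G}"
proof
  fix u assume u: "u \<in> carrier (KK G)"
  interpret S: symp "KK G" sympl using comm_group.KK_symp[OF assms(1,2)] .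
  have Sp: "SpK G = S.Sp" unfolding SpK_def S.Sp_def AutK_def ..
  show "{\<sigma> u | \<sigma>. \<sigma> \<in> SpK G} = {\<sigma> u | \<sigma>. \<sigma> \<in> AutK G}"
  proof
    show "{\<sigma> u | \<sigma>. \<sigma> \<in> SpK G} \<subseteq> {\<sigma> u | \<sigma>. \<sigma> \<in> AutK G}"
      unfolding SpK_def by blast
    show "{\<sigma> u | \<sigma>. \<sigma> \<in> AutK G} \<subseteq> {\<sigma> u | \<sigma>. \<sigma> \<in> SpK G}"
    proof
      fix w assume "w \<in> {\<sigma> u | \<sigma>. \<sigma> \<in> AutK G}"
      then obtain \<sigma> where s: "\<sigma> \<in> AutK G" "w = \<sigma> u" by blast
      obtain \<tau> where t: "\<tau> \<in> S.Sp" "\<tau> u = \<sigma> u"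
        using S.orbit[OF u] s unfolding AutK_def by blast
      have "\<tau> \<in> SpK G" using t Sp by simp
      moreover have "w = \<tau> u" using t s by simp
      ultimately show "w \<in> {\<sigma> u | \<sigma>. \<sigma> \<in> SpK G}" by blast
    qed
  qed
qed

end
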